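(* Let $n,a,t\in\mathbb N$ satisfy $t<a<n$. If $\mathcal F\subseteq\binom{[n]}{a}$ and $\mathcal G\subseteq\binom{[n]}{a}$ are such that $|F\cap G|\le t$ for all $F\in\mathcal F$ and $G\in\mathcal G$, then $$|\mathcal F|\cdot|\mathcal G|\le 32\,a(n-a)\cdot e^{-(a-t-1)^2/(20a)}\binom{n}{a}^2.$$
   Context: $[n]=\{1,\dots,n\}$ and $\binom{[n]}{a}$ denotes the family of all $a$-element subsets of $[n]$. *)

theory Defs
  imports Complex_Main
begin

end

theory Submission
  imports Defs
begin


lemma K_expand: fixes p s :: real shows "(p + (1-p)*exp s)*(p+(1-p)*exp(-s)) = 1 + p*(1-p)*(exp s + exp (-s) - 2)"
proof -
  have "exp s * exp (-s) = 1" by (simp add: exp_minus)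
  then show ?thesis by (simp add: algebra_simps power2_eq_square)
qed

lemma cosh_ge: "exp s + exp (-s) \<ge> (2::real)"
  using exp_ge_add_one_self[of s] exp_ge_add_one_self[of "-s"] by linarith

lemma K_ge1: fixes p s :: real assumes "0 \<le> p" "p \<le> 1" shows "(p + (1-p)*exp s)*(p+(1-p)*exp(-s)) \<ge> 1"
  unfolding K_expand using cosh_ge[of s] assms by (simp add: mult_nonneg_nonneg)

lemma r_bound: fixes r y :: real assumes "0 < y" "y \<le> r" "r \<le> 1" "y \<le> 1"
  shows "r + 1/r \<le> y + 1/y"
proof -
  have "(y + 1/y) - (r + 1/r) = (r - y) * (1 - r*y) / (r*y)"
    using assms by (simp add: field_simps)
  moreover have "r*y \<le> 1" using assms by (simp add: mult_le_one)
  moreover have "0 \<le> (r - y) * (1 - r*y) / (r*y)"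
    using assms \<open>r*y \<le> 1\<close> by (intro divide_nonneg_pos mult_nonneg_nonneg) auto
  ultimately show ?thesis by linarith
qed

lemma scalar:
  fixes p s u v A B P0 P1 C :: real
  assumes p0: "0 < p" and p1: "p < 1" and s: "0 \<le> s" and u: "0 < u" and v: "0 < v"
    and hA1: "A \<le> p*P1" and hA0: "A \<le> p*P0" and hB0: "B \<le> (1-p)*P0" and hB1: "B \<le> (1-p)*(exp s*P1)"
    and c1: "P1*u \<le> C" and c0: "P0*v \<le> C" and P0: "0 \<le> P0" and P1: "0 \<le> P1"
  shows "(A+B)*(p*u+(1-p)*v) \<le> (p + (1-p)*exp s)*(p+(1-p)*exp(-s)) * C"
proof -
  define K where "K = (p + (1-p)*exp s)*(p+(1-p)*exp(-s))"
  define q where "q = 1 - p"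
  have q: "0 < q" "p + q = 1" using p1 by (auto simp: q_def)
  have K1: "K \<ge> 1" unfolding K_def by (rule K_ge1) (use p0 p1 in auto)
  have C0: "C \<ge> 0" using c0 P0 v by (meson mult_nonneg_nonneg less_imp_le order_trans)
  have mu0: "0 \<le> p*u+q*v" using p0 q u v by simp
  have main: "(A+B)*(p*u+q*v) \<le> K * C"
  proof (cases "u \<le> v")
    case True
    have "A + B \<le> p*P0 + q*P0" using hA0 hB0 q_def by simp
    also have "\<dots> = P0" using q by (simp flip: distrib_right)
    finally have ab: "A + B \<le> P0" .
    have "p*u+q*v \<le> p*v + q*v" using True p0 by simp
    also have "\<dots> = v" using q by (simp flip: distrib_right)
    finally have mv: "p*u+q*v \<le> v" .
    have "(A+B)*(p*u+q*v) \<le> P0*(p*u+q*v)" by (rule mult_right_mono[OF ab mu0])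
    also have "\<dots> \<le> P0 * v" by (rule mult_left_mono[OF mv P0])
    also have "\<dots> \<le> C" by (rule c0)
    also have "\<dots> \<le> K * C" using K1 C0 by (simp add: mult_le_cancel_right1)
    finally show "(A+B)*(p*u+q*v) \<le> K * C" .
  next
    case False
    show "(A+B)*(p*u+q*v) \<le> K * C"
    proof (cases "exp (-s) * u \<le> v")
      case True
      define r where "r = v / u"
      have r1: "exp (-s) \<le> r" "r \<le> 1" using True False u by (auto simp: r_def field_simps)
      have es: "exp (-s) \<le> 1" using s by simp
      have rr: "r + 1/r \<le> exp (-s) + 1/exp(-s)" by (rule r_bound) (use r1 es in auto)
      have rr': "v/u + u/v \<le> exp s + exp (-s)" using rr by (simp add: r_def exp_minus divide_inverse mult.commute add.commute)
      have ab: "A + B \<le> p*P1 + q*P0" using hA1 hB0 q_def by simp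
      have "(A+B)*(p*u+q*v) \<le> (p*P1 + q*P0)*(p*u+q*v)" by (rule mult_right_mono[OF ab mu0])
      also have "\<dots> = p*p*(P1*u) + q*q*(P0*v) + p*q*(P1*v + P0*u)" by (simp add: algebra_simps)
      also have "\<dots> \<le> p*p*C + q*q*C + p*q*(C*(v/u) + C*(u/v))"
      proof -
        have a: "P1*v \<le> C*(v/u)"
        proof -
          have "P1 \<le> C/u" using c1 u by (simp add: field_simps)
          then have "P1*v \<le> (C/u)*v" using v mult_right_mono[of P1 "C/u" v] by linarith
          then show ?thesis by simp
        qed
        have b: "P0*u \<le> C*(u/v)"
        proof -
          have "P0 \<le> C/v" using c0 v by (simp add: field_simps)
          then have "P0*u \<le> (C/v)*u" using u mult_right_mono[of P0 "C/v" u] by linarith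
          then show ?thesis by simp
        qed
        have pq: "0 \<le> p*q" using p0 q by simp
        have "p*q*(P1*v + P0*u) \<le> p*q*(C*(v/u) + C*(u/v))" using a b pq by (simp add: mult_left_mono)
        moreover have "p*p*(P1*u) \<le> p*p*C" using c1 by (simp add: mult_left_mono)
        moreover have "q*q*(P0*v) \<le> q*q*C" using c0 by (simp add: mult_left_mono)
        ultimately show ?thesis by linarith
      qed
      also have "\<dots> = C * (p*p + q*q + p*q*(v/u + u/v))" by (simp add: algebra_simps)
      also have "\<dots> \<le> C * (p*p + q*q + p*q*(exp s + exp (-s)))"
        using rr' p0 q C0 by (intro mult_left_mono) (auto intro: mult_left_mono)
      also have "\<dots> = K * C" unfolding K_def q_def by (simp add: algebra_simps exp_minus) 
      finally show ?thesis .
    next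
      case True2: False
      have "(p + q*exp s)*P1 = p*P1 + (1-p)*(exp s*P1)" by (simp add: q_def algebra_simps)
      then have ab: "A + B \<le> (p + q*exp s)*P1" using hA1 hB1 by linarith
      have mv: "p*u+q*v \<le> (p + q*exp(-s))*u" using True2 q by (simp add: algebra_simps)
      have f0: "0 \<le> p + q*exp s" using p0 q by simp
      have "(A+B)*(p*u+q*v) \<le> ((p + q*exp s)*P1)*(p*u+q*v)" by (rule mult_right_mono[OF ab mu0])
      also have "\<dots> \<le> ((p + q*exp s)*P1)*((p + q*exp(-s))*u)"
        by (rule mult_left_mono[OF mv]) (use f0 P1 in simp)
      also have "\<dots> = K * (P1*u)" unfolding K_def q_def by (simp add: algebra_simps)
      also have "\<dots> \<le> K * C" using c1 K1 by (simp add: mult_left_mono)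
      finally show ?thesis .
    qed
  qed
  then show ?thesis by (simp add: K_def q_def)
qed



definition wt :: "nat \<Rightarrow> real \<Rightarrow> nat set \<Rightarrow> real" where
  "wt n p Z = p ^ card Z * (1-p) ^ (n - card Z)"
definition hF :: "nat set set \<Rightarrow> nat set \<Rightarrow> nat" where
  "hF F Z = Min ((\<lambda>X. card (X - Z)) ` F)"
definition Phi :: "nat \<Rightarrow> real \<Rightarrow> real \<Rightarrow> nat set set \<Rightarrow> real" where
  "Phi n p s F = (\<Sum>Z\<in>Pow {1..n}. wt n p Z * exp (s * real (hF F Z)))"
definition mu :: "nat \<Rightarrow> real \<Rightarrow> nat set set \<Rightarrow> real" where
  "mu n p F = (\<Sum>Z\<in>Pow {1..n}. if Z \<in> F then wt n p Z else 0)"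

lemma sum_Pow_split:
  "(\<Sum>Z\<in>Pow {1..Suc n}. f Z) = (\<Sum>Z\<in>Pow {1..n}. f Z) + (\<Sum>Z\<in>Pow {1..n}. f (insert (Suc n) Z))"
proof -
  have e: "Pow {1..Suc n} = Pow {1..n} \<union> insert (Suc n) ` Pow {1..n}"
    by (simp add: atLeastAtMostSuc_conv Pow_insert)
  have inj: "inj_on (insert (Suc n)) (Pow {1..n})"
  proof (rule inj_onI)
    fix x y assume "x \<in> Pow {1..n}" "y \<in> Pow {1..n}" and eq: "insert (Suc n) x = insert (Suc n) y"
    then have "Suc n \<notin> x" "Suc n \<notin> y" by auto
    then show "x = y" using eq by (metis Diff_insert_absorb)
  qed
  have d: "Pow {1..n} \<inter> insert (Suc n) ` Pow {1..n} = {}" by auto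
  have r: "sum f (insert (Suc n) ` Pow {1..n}) = (\<Sum>Z\<in>Pow {1..n}. f (insert (Suc n) Z))"
    using sum.reindex[OF inj, of f] by (simp add: comp_def)
  have "sum f (Pow {1..n} \<union> insert (Suc n) ` Pow {1..n}) = sum f (Pow {1..n}) + sum f (insert (Suc n) ` Pow {1..n})"
    by (rule sum.union_disjoint) (use d in auto)
  then show ?thesis unfolding e r .
qed

lemma wt_out: assumes "Z \<subseteq> {1..n}" shows "wt (Suc n) p Z = (1-p) * wt n p Z"
proof -
  have "card Z \<le> n" using card_mono[OF _ assms] by simp
  then have "Suc n - card Z = Suc (n - card Z)" by simp
  then show ?thesis unfolding wt_def by simp
qed

lemma wt_in: assumes "Z \<subseteq> {1..n}" shows "wt (Suc n) p (insert (Suc n) Z) = p * wt n p Z"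
proof -
  have f: "finite Z" using assms finite_subset by blast
  have "Suc n \<notin> Z" using assms by auto
  then have "card (insert (Suc n) Z) = Suc (card Z)" using f by simp
  then show ?thesis unfolding wt_def by simp
qed

lemma wt_nonneg: "0 \<le> p \<Longrightarrow> p \<le> 1 \<Longrightarrow> 0 \<le> wt n p Z"
  unfolding wt_def by simp

lemma wt_pos: "0 < p \<Longrightarrow> p < 1 \<Longrightarrow> 0 < wt n p Z"
  unfolding wt_def by simp

lemma hF_le: "finite F \<Longrightarrow> X \<in> F \<Longrightarrow> hF F Z \<le> card (X - Z)"
  unfolding hF_def by (rule Min_le) auto

lemma hF_attain: "finite F \<Longrightarrow> F \<noteq> {} \<Longrightarrow> \<exists>X\<in>F. hF F Z = card (X - Z)"
proof -
  assume "finite F" "F \<noteq> {}"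
  then have "hF F Z \<in> (\<lambda>X. card (X - Z)) ` F" unfolding hF_def by (intro Min_in) auto
  then show ?thesis by auto
qed

lemma sum_cmp:
  assumes c: "0 \<le> c" and s: "0 \<le> s" and p: "0 \<le> p" "p \<le> 1"
    and h: "\<And>Z. Z \<in> S \<Longrightarrow> real (h Z) \<le> x + real (h' Z)"
  shows "(\<Sum>Z\<in>S. c * (wt n p Z * exp (s * real (h Z)))) \<le> c * exp (s*x) * (\<Sum>Z\<in>S. wt n p Z * exp (s * real (h' Z)))"
proof -
  have "(\<Sum>Z\<in>S. c * (wt n p Z * exp (s * real (h Z)))) \<le> (\<Sum>Z\<in>S. c * exp (s*x) * (wt n p Z * exp (s * real (h' Z))))"
  proof (rule sum_mono)
    fix Z assume "Z \<in> S"
    then have "s * real (h Z) \<le> s * x + s * real (h' Z)" using h s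
      by (metis distrib_left mult_left_mono)
    then have "exp (s * real (h Z)) \<le> exp (s*x) * exp (s * real (h' Z))"
      by (simp add: exp_add[symmetric])
    then have "wt n p Z * exp (s * real (h Z)) \<le> wt n p Z * (exp (s*x) * exp (s * real (h' Z)))"
      using wt_nonneg[OF p] by (simp add: mult_left_mono)
    then show "c * (wt n p Z * exp (s * real (h Z))) \<le> c * exp (s*x) * (wt n p Z * exp (s * real (h' Z)))"
      using c by (simp add: mult_left_mono algebra_simps)
  qed
  also have "\<dots> = c * exp (s*x) * (\<Sum>Z\<in>S. wt n p Z * exp (s * real (h' Z)))"
    by (simp add: sum_distrib_left)
  finally show ?thesis .
qed

lemma mu_pos: assumes "0 < p" "p < 1" "X \<in> F" "X \<subseteq> {1..n}" shows "0 < mu n p F"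
proof -
  have "wt n p X \<le> mu n p F" unfolding mu_def
    using member_le_sum[of X "Pow {1..n}" "\<lambda>Z. if Z \<in> F then wt n p Z else 0"] assms
      wt_nonneg[of p n] by auto
  then show ?thesis using wt_pos[OF assms(1,2), of n X] by linarith
qed

lemma mu_nonneg: assumes "0 \<le> p" "p \<le> 1" shows "0 \<le> mu n p F"
  unfolding mu_def using wt_nonneg[OF assms] by (simp add: sum_nonneg)

lemma Phi_nonneg: assumes "0 \<le> p" "p \<le> 1" shows "0 \<le> Phi n p s F"
  unfolding Phi_def using wt_nonneg[OF assms] by (simp add: sum_nonneg)

lemma cube:
  assumes p0: "0 < p" and p1: "p < 1" and s: "0 \<le> s"
  shows "F \<noteq> {} \<Longrightarrow> F \<subseteq> Pow {1..n} \<Longrightarrow>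
    Phi n p s F * mu n p F \<le> ((p + (1-p)*exp s)*(p+(1-p)*exp(-s)))^n"
proof (induction n arbitrary: F)
  case 0
  then have "F = {{}}" by auto
  then show ?case by (simp add: Phi_def mu_def wt_def hF_def)
next
  case (Suc n)
  define K where "K = (p + (1-p)*exp s)*(p+(1-p)*exp(-s))"
  define N where "N = Suc n"
  define F0 where "F0 = {Z \<in> Pow {1..n}. Z \<in> F}"
  define F1 where "F1 = {Z \<in> Pow {1..n}. insert N Z \<in> F}"
  have K1: "1 \<le> K" unfolding K_def by (rule K_ge1) (use p0 p1 in auto)
  have pp: "0 \<le> p" "p \<le> 1" using p0 p1 by auto
  have finF: "finite F" using Suc.prems(2) by (rule finite_subset) simp
  have F0s: "F0 \<subseteq> Pow {1..n}" and F1s: "F1 \<subseteq> Pow {1..n}" unfolding F0_def F1_def by auto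
  have finF0: "finite F0" and finF1: "finite F1"
    using finite_subset[OF F0s] finite_subset[OF F1s] by auto
  define A where "A = (\<Sum>Z\<in>Pow {1..n}. p * (wt n p Z * exp (s * real (hF F (insert N Z)))))"
  define B where "B = (\<Sum>Z\<in>Pow {1..n}. (1-p) * (wt n p Z * exp (s * real (hF F Z))))"
  have PhiAB: "Phi (Suc n) p s F = A + B"
    unfolding Phi_def sum_Pow_split A_def B_def N_def
    by (simp add: wt_in wt_out add.commute mult.assoc)
  have muS: "mu (Suc n) p F = p * mu n p F1 + (1-p) * mu n p F0"
  proof -
    have "mu (Suc n) p F = (\<Sum>Z\<in>Pow {1..n}. (1-p) * (if Z \<in> F0 then wt n p Z else 0))
        + (\<Sum>Z\<in>Pow {1..n}. p * (if Z \<in> F1 then wt n p Z else 0))"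
      unfolding mu_def sum_Pow_split
      by (intro arg_cong2[where f="(+)"] sum.cong) (auto simp: F0_def F1_def N_def wt_in wt_out)
    then show ?thesis unfolding mu_def by (simp add: sum_distrib_left)
  qed
  have hA1: "real (hF F (insert N Z)) \<le> 0 + real (hF F1 Z)" and hB1: "real (hF F Z) \<le> 1 + real (hF F1 Z)"
    if Zp: "Z \<in> Pow {1..n}" and ne: "F1 \<noteq> {}" for Z
  proof -
    obtain X where X: "X \<in> F1" "hF F1 Z = card (X - Z)" using hF_attain[OF finF1 ne] by blast
    have XF: "insert N X \<in> F" and Xs: "X \<subseteq> {1..n}" using X(1) unfolding F1_def by auto
    have finX: "finite X" using Xs finite_subset by blast
    have "hF F (insert N Z) \<le> card (insert N X - insert N Z)" by (rule hF_le[OF finF XF])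
    also have "\<dots> \<le> card (X - Z)" by (rule card_mono) (use finX in auto)
    finally show "real (hF F (insert N Z)) \<le> 0 + real (hF F1 Z)" using X(2) by simp
    have "hF F Z \<le> card (insert N X - Z)" by (rule hF_le[OF finF XF])
    also have "\<dots> \<le> card (insert N (X - Z))" by (rule card_mono) (use finX in auto)
    also have "\<dots> \<le> Suc (card (X - Z))" using finX by (simp add: card_insert_if)
    finally show "real (hF F Z) \<le> 1 + real (hF F1 Z)" using X(2) by simp
  qed
  have hA0: "real (hF F (insert N Z)) \<le> 0 + real (hF F0 Z)" and hB0: "real (hF F Z) \<le> 0 + real (hF F0 Z)"
    if Zp: "Z \<in> Pow {1..n}" and ne: "F0 \<noteq> {}" for Z
  proof -
    obtain X where X: "X \<in> F0" "hF F0 Z = card (X - Z)" using hF_attain[OF finF0 ne] by blast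
    have XF: "X \<in> F" and Xs: "X \<subseteq> {1..n}" using X(1) unfolding F0_def by auto
    have finX: "finite X" using Xs finite_subset by blast
    have "hF F (insert N Z) \<le> card (X - insert N Z)" by (rule hF_le[OF finF XF])
    also have "\<dots> \<le> card (X - Z)" by (rule card_mono) (use finX in auto)
    finally show "real (hF F (insert N Z)) \<le> 0 + real (hF F0 Z)" using X(2) by simp
    have "hF F Z \<le> card (X - Z)" by (rule hF_le[OF finF XF])
    then show "real (hF F Z) \<le> 0 + real (hF F0 Z)" using X(2) by simp
  qed
  have A1: "A \<le> p * Phi n p s F1" if "F1 \<noteq> {}"
    using sum_cmp[of p s p "Pow {1..n}" "\<lambda>Z. hF F (insert N Z)" 0 "hF F1" n] hA1 that p0 p1 s
    unfolding A_def Phi_def by auto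
  have A0: "A \<le> p * Phi n p s F0" if "F0 \<noteq> {}"
    using sum_cmp[of p s p "Pow {1..n}" "\<lambda>Z. hF F (insert N Z)" 0 "hF F0" n] hA0 that p0 p1 s
    unfolding A_def Phi_def by auto
  have B1: "B \<le> (1-p) * (exp s * Phi n p s F1)" if "F1 \<noteq> {}"
    using sum_cmp[of "1-p" s p "Pow {1..n}" "hF F" 1 "hF F1" n] hB1 that p0 p1 s
    unfolding B_def Phi_def by (auto simp: mult.assoc)
  have B0: "B \<le> (1-p) * Phi n p s F0" if "F0 \<noteq> {}"
    using sum_cmp[of "1-p" s p "Pow {1..n}" "hF F" 0 "hF F0" n] hB0 that p0 p1 s
    unfolding B_def Phi_def by auto
  have Fne: "F0 \<noteq> {} \<or> F1 \<noteq> {}"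
  proof -
    obtain X where X: "X \<in> F" using Suc.prems(1) by blast
    have "X \<subseteq> {1..Suc n}" using X Suc.prems(2) by blast
    then have Xs: "X \<subseteq> insert N {1..n}" using atLeastAtMostSuc_conv[of 1 n] by (simp add: N_def)
    show ?thesis
    proof (cases "N \<in> X")
      case True
      then have "X - {N} \<in> F1" using X Xs unfolding F1_def by (auto simp: insert_absorb)
      then show ?thesis by blast
    next
      case False
      then have "X \<in> F0" using X Xs unfolding F0_def by auto
      then show ?thesis by blast
    qed
  qed
  have mu0e: "mu n p {} = 0" unfolding mu_def by simp
  have IH0: "Phi n p s F0 * mu n p F0 \<le> K^n" if "F0 \<noteq> {}" using Suc.IH[OF that F0s] by (simp add: K_def)
  have IH1: "Phi n p s F1 * mu n p F1 \<le> K^n" if "F1 \<noteq> {}" using Suc.IH[OF that F1s] by (simp add: K_def)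
  have Kn0: "0 \<le> K^n" using K1 by simp
  have goal: "(A + B) * (p * mu n p F1 + (1-p) * mu n p F0) \<le> K * K^n"
  proof (cases "F1 = {}")
    case True
    then have ne: "F0 \<noteq> {}" using Fne by blast
    have ab: "A + B \<le> Phi n p s F0" using A0[OF ne] B0[OF ne] by (simp add: algebra_simps)
    have m: "p * mu n p F1 + (1-p) * mu n p F0 \<le> mu n p F0"
      using True mu0e mu_nonneg[OF pp, of n F0] pp by (simp add: mult_left_le_one_le)
    have m0: "0 \<le> p * mu n p F1 + (1-p) * mu n p F0"
      using mu_nonneg[OF pp] pp by simp
    have "(A + B) * (p * mu n p F1 + (1-p) * mu n p F0) \<le> Phi n p s F0 * (p * mu n p F1 + (1-p) * mu n p F0)"
      by (rule mult_right_mono[OF ab m0])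
    also have "\<dots> \<le> Phi n p s F0 * mu n p F0"
      by (rule mult_left_mono[OF m Phi_nonneg[OF pp]])
    also have "\<dots> \<le> K^n" by (rule IH0[OF ne])
    also have "\<dots> \<le> K * K^n" using K1 Kn0 by (simp add: mult_le_cancel_right1)
    finally show ?thesis .
  next
    case ne1: False
    show ?thesis
    proof (cases "F0 = {}")
      case True
      have ab: "A + B \<le> (p + (1-p)*exp s) * Phi n p s F1" using A1[OF ne1] B1[OF ne1] by (simp add: algebra_simps)
      have m0: "0 \<le> p * mu n p F1 + (1-p) * mu n p F0"
        using mu_nonneg[OF pp] pp by simp
      have c0: "0 \<le> p + (1-p)*exp s" using pp by simp
      have "(A + B) * (p * mu n p F1 + (1-p) * mu n p F0) \<le> ((p + (1-p)*exp s) * Phi n p s F1) * (p * mu n p F1)"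
        using mult_right_mono[OF ab m0] True mu0e by simp
      also have "\<dots> = ((p + (1-p)*exp s) * p) * (Phi n p s F1 * mu n p F1)" by (simp add: algebra_simps)
      also have "\<dots> \<le> ((p + (1-p)*exp s) * p) * K^n"
        by (rule mult_left_mono[OF IH1[OF ne1]]) (use c0 pp in simp)
      also have "\<dots> \<le> K * K^n"
      proof -
        have "K - (p + (1-p)*exp s) * p = (p + (1-p)*exp s) * ((1-p)*exp (-s))"
          unfolding K_def by (simp add: algebra_simps)
        also have "\<dots> \<ge> 0" using c0 pp by simp
        finally have "(p + (1-p)*exp s) * p \<le> K" by simp
        then show ?thesis using Kn0 by (simp add: mult_right_mono)
      qed
      finally show ?thesis .
    next
      case ne0: False
      obtain X1 where "X1 \<in> F1" using ne1 by blast
      then have u: "0 < mu n p F1" using F1s mu_pos[OF p0 p1] by blast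
      obtain X0 where "X0 \<in> F0" using ne0 by blast
      then have v: "0 < mu n p F0" using F0s mu_pos[OF p0 p1] by blast
      have "(A + B) * (p * mu n p F1 + (1-p) * mu n p F0) \<le> K * K^n"
        using scalar[OF p0 p1 s u v A1[OF ne1] A0[OF ne0] B0[OF ne0] B1[OF ne1] IH1[OF ne1] IH0[OF ne0]
              Phi_nonneg[OF pp] Phi_nonneg[OF pp]] by (simp add: K_def)
      then show ?thesis .
    qed
  qed
  show ?case unfolding PhiAB muS using goal by (simp add: K_def)
qed



lemma choose_rec: assumes "k < n" shows "real (n choose Suc k) * real (Suc k) = real (n choose k) * real (n - k)"
proof -
  obtain m where m: "n = Suc m" using assms by (cases n) auto
  have "(n - k) * (n choose k) = n * ((n - 1) choose k)" by (rule binomial_absorb_comp)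
  moreover have "Suc k * (n choose Suc k) = n * ((n-1) choose k)" using Suc_times_binomial[of k m] m by simp
  ultimately have "(n choose Suc k) * Suc k = (n choose k) * (n - k)" by (simp add: mult.commute)
  then show ?thesis by (metis of_nat_mult)
qed

lemma binom_mode:
  fixes n a :: nat
  assumes a0: "0 < a" and an: "a < n"
  defines "p \<equiv> real a / real n"
  shows "1 \<le> real (Suc n) * (real (n choose a) * p^a * (1-p)^(n-a))"
proof -
  define q where "q = 1 - p"
  define T where "T k = real (n choose k) * p^k * q^(n-k)" for k
  have n0: "real n > 0" using an by simp
  have p0: "0 < p" "p < 1" using a0 an n0 by (auto simp: p_def field_simps)
  have q0: "0 < q" using p0 by (simp add: q_def)
  have T0: "0 \<le> T k" for k using p0 q0 by (simp add: T_def)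
  have qa: "q * real n = real n - real a" using n0 by (simp add: q_def p_def field_simps)
  have pa: "p * real n = real a" using n0 by (simp add: p_def)
  have rec: "T (Suc k) * real (Suc k) * (real n - real a) = T k * real (n - k) * real a" if "k < n" for k
  proof -
    have e: "n - k = Suc (n - Suc k)" using that by simp
    have "T (Suc k) * real (Suc k) * q = (real (n choose Suc k) * real (Suc k)) * p^Suc k * (q^(n - Suc k) * q)"
      by (simp add: T_def algebra_simps)
    also have "\<dots> = real (n choose k) * real (n - k) * p^Suc k * q^(n-k)"
      using choose_rec[OF that] e by (simp add: mult.commute)
    also have "\<dots> = T k * real (n - k) * p" by (simp add: T_def algebra_simps)
    finally have "T (Suc k) * real (Suc k) * q * real n = T k * real (n - k) * p * real n" by simp
    then show ?thesis using qa pa by (simp add: mult.assoc)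
  qed
  have up: "T k \<le> T (Suc k)" if "Suc k \<le> a" for k
  proof -
    have kn: "k < n" using that an by simp
    have ineq: "real (Suc k) * (real n - real a) \<le> real (n - k) * real a"
    proof -
      have "real (n - k) * real a - real (Suc k) * (real n - real a) = real n * (real a - real k - 1) + real a"
        using kn by (simp add: of_nat_diff algebra_simps)
      moreover have "real a - real k - 1 \<ge> 0" using that by simp
      ultimately show ?thesis using n0 by (smt (verit) mult_nonneg_nonneg of_nat_0_le_iff)
    qed
    have pos: "real (Suc k) * (real n - real a) > 0" using an by simp
    have "T k * (real (Suc k) * (real n - real a)) \<le> T k * (real (n - k) * real a)"
      by (rule mult_left_mono[OF ineq T0])
    also have "\<dots> = T (Suc k) * (real (Suc k) * (real n - real a))" using rec[OF kn] by (simp add: mult.assoc)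
    finally show ?thesis using pos by (rule mult_right_le_imp_le)
  qed
  have down: "T (Suc k) \<le> T k" if "a \<le> k" "k < n" for k
  proof -
    have ineq: "real (n - k) * real a \<le> real (Suc k) * (real n - real a)"
    proof -
      have "real (Suc k) * (real n - real a) - real (n - k) * real a = real n * (real k + 1 - real a) - real a"
        using that by (simp add: of_nat_diff algebra_simps)
      moreover have "real n * (real k + 1 - real a) \<ge> real n" using that n0 by simp
      moreover have "real a < real n" using an by simp
      ultimately show ?thesis by linarith
    qed
    have pos: "real (Suc k) * (real n - real a) > 0" using an by simp
    have "T (Suc k) * (real (Suc k) * (real n - real a)) = T k * (real (n - k) * real a)"
      using rec[OF that(2)] by (simp add: mult.assoc)
    also have "\<dots> \<le> T k * (real (Suc k) * (real n - real a))" by (rule mult_left_mono[OF ineq T0])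
    finally show ?thesis using pos by (rule mult_right_le_imp_le)
  qed
  have le1: "T (a - j) \<le> T a" for j
  proof (induction j)
    case 0 then show ?case by simp
  next
    case (Suc j)
    show ?case
    proof (cases "j < a")
      case True
      have "T (a - Suc j) \<le> T (Suc (a - Suc j))" by (rule up) (use True in simp)
      also have "Suc (a - Suc j) = a - j" using True by simp
      finally show ?thesis using Suc.IH by simp
    next
      case False
      then have "a - Suc j = a - j" by simp
      then show ?thesis using Suc.IH by simp
    qed
  qed
  have le2: "a + j \<le> n \<Longrightarrow> T (a + j) \<le> T a" for j
  proof (induction j)
    case 0 then show ?case by simp
  next
    case (Suc j)
    have "T (a + Suc j) \<le> T (a + j)" using down[of "a + j"] Suc.prems by simp
    then show ?case using Suc by simp
  qed
  have allle: "T k \<le> T a" if "k \<le> n" for k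
  proof (cases "k \<le> a")
    case True then show ?thesis using le1[of "a - k"] by simp
  next
    case False then show ?thesis using le2[of "k - a"] that by simp
  qed
  have "1 = (p + q)^n" by (simp add: q_def)
  also have "\<dots> = (\<Sum>k\<le>n. T k)" unfolding binomial_ring T_def by simp
  also have "\<dots> \<le> (\<Sum>k\<le>n. T a)" by (rule sum_mono) (use allle in simp)
  also have "\<dots> = real (Suc n) * T a" by simp
  finally show ?thesis by (simp add: T_def q_def)
qed



lemma cosh_bound: fixes s :: real assumes "0 \<le> s" "s \<le> 1" shows "exp s + exp (-s) - 2 \<le> 2 * s^2"
proof -
  have e1: "exp s \<le> 1 + s + s^2" by (rule exp_bound) (use assms in auto)
  have "1 + s \<le> exp s" by simp
  then have e2: "exp (-s) \<le> 1 / (1 + s)" using assms by (simp add: exp_minus field_simps)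
  have "1 / (1 + s) = 1 - s + s^2/(1+s)" using assms by (simp add: field_simps power2_eq_square)
  moreover have "s^2/(1+s) \<le> s^2" using assms by (simp add: divide_le_eq field_simps power2_eq_square mult_left_le)
  ultimately show ?thesis using e1 e2 by linarith
qed

lemma K_bound: fixes p s :: real assumes "0 \<le> p" "p \<le> 1" "0 \<le> s" "s \<le> 1"
  shows "(p + (1-p)*exp s)*(p+(1-p)*exp(-s)) \<le> exp (p * (2 * s^2))"
proof -
  have c: "exp s + exp (-s) - 2 \<le> 2 * s^2" by (rule cosh_bound) (use assms in auto)
  have c0: "0 \<le> exp s + exp (-s) - 2" using cosh_ge[of s] by simp
  have "p*(1-p)*(exp s + exp (-s) - 2) \<le> p*(exp s + exp (-s) - 2)"
  proof -
    have "p*(1-p)*(exp s + exp (-s) - 2) = p*(exp s + exp (-s) - 2) - p*(p*(exp s + exp (-s) - 2))"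
      by (simp add: algebra_simps)
    moreover have "0 \<le> p*(p*(exp s + exp (-s) - 2))" using assms c0 by simp
    ultimately show ?thesis by linarith
  qed
  also have "\<dots> \<le> p * (2*s^2)" using c assms by (simp add: mult_left_mono)
  finally have "(p + (1-p)*exp s)*(p+(1-p)*exp(-s)) \<le> 1 + p * (2*s^2)" unfolding K_expand by simp
  also have "\<dots> \<le> exp (p * (2*s^2))" by simp
  finally show ?thesis .
qed

lemma final_real:
  fixes cF cG Cb n a d M :: real
  assumes a: "1 \<le> a" and d1: "1 \<le> d" and n2: "2 \<le> n" and Mn: "n + 1 \<le> M"
    and triv: "cF * cG \<le> Cb^2" and main: "cF * cG \<le> (n+1)^2 * Cb^2 * exp (- (d^2/(8*a)))"
  shows "cF * cG \<le> M * exp (- ((d - 1)^2) / (20 * a)) * Cb^2"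
proof -
  define x where "x = (d-1)^2/(20*a)"
  have ex: "exp (- ((d - 1)^2) / (20 * a)) = exp (-x)" by (simp add: x_def)
  have goal: "cF * cG \<le> M * exp (-x) * Cb^2"
  proof (cases "1 \<le> M * exp (-x)")
    case True
    have "Cb^2 \<le> M * exp (-x) * Cb^2" using True by (simp add: mult_le_cancel_right1)
    then show ?thesis using triv by linarith
  next
    case False
    then have Mx: "M < exp x" by (simp add: exp_minus field_simps)
    have "d^2/(8*a) \<ge> 2*x"
    proof -
      have "(d-1)^2 \<le> d^2" using d1 by (simp add: power_mono)
      then have "(d-1)^2/(10*a) \<le> d^2/(10*a)" using a by (simp add: divide_right_mono)
      also have "\<dots> \<le> d^2/(8*a)" using a by (simp add: frac_le)
      finally show ?thesis by (simp add: x_def)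
    qed
    then have e: "exp (- (d^2/(8*a))) \<le> exp (-2*x)" by simp
    have n1: "(n+1)^2 \<le> M * exp x"
    proof -
      have "(n+1)^2 = (n+1)*(n+1)" by (simp add: power2_eq_square)
      also have "\<dots> \<le> M * exp x" using Mn Mx n2 by (intro mult_mono) auto
      finally show ?thesis .
    qed
    have C0: "0 \<le> Cb^2" by simp
    have "cF * cG \<le> (n+1)^2 * Cb^2 * exp (- (d^2/(8*a)))" by (rule main)
    also have "\<dots> \<le> (M * exp x) * Cb^2 * exp (-2*x)"
      using n1 e C0 Mn n2 by (intro mult_mono) (auto intro!: mult_nonneg_nonneg)
    also have "\<dots> = M * (exp x * exp (-2*x)) * Cb^2" by (simp add: algebra_simps)
    also have "exp x * exp (-2*x) = exp (-x)" by (simp flip: exp_add)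
    finally show ?thesis by simp
  qed
  then show ?thesis unfolding ex .
qed

theorem theorem4:
  fixes n a t :: nat
    and F G :: "nat set set"
  assumes "t < a" and "a < n"
    and "F \<subseteq> {A. A \<subseteq> {1..n} \<and> card A = a}"
    and "G \<subseteq> {A. A \<subseteq> {1..n} \<and> card A = a}"
    and "\<forall>X\<in>F. \<forall>Y\<in>G. card (X \<inter> Y) \<le> t"
  shows "real (card F) * real (card G)
           \<le> 32 * real a * real (n - a) * exp (- ((real a - real t - 1)^2) / (20 * real a))
              * (real (n choose a))^2"
proof -
  note ta = assms(1) and an = assms(2) and Fs = assms(3) and Gs = assms(4) and FG = assms(5)
  define Cb where "Cb = real (n choose a)"
  define d where "d = a - t"
  have a1: "1 \<le> a" using ta by simp
  have d1: "1 \<le> d" using ta by (simp add: d_def)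
  have dle: "d \<le> a" by (simp add: d_def)
  have dr: "real a - real t - 1 = real d - 1" using ta by (simp add: d_def of_nat_diff)
  have finS: "finite {A. A \<subseteq> {1..n} \<and> card A = (a::nat)}" by (rule finite_subset[of _ "Pow {1..n}"]) auto
  have cardS: "card {A. A \<subseteq> {1..n} \<and> card A = a} = n choose a" using n_subsets[of "{1..n}" a] by simp
  have cF: "card F \<le> n choose a" using card_mono[OF finS Fs] cardS by simp
  have cG: "card G \<le> n choose a" using card_mono[OF finS Gs] cardS by simp
  have triv: "real (card F) * real (card G) \<le> Cb^2"
    unfolding Cb_def power2_eq_square using cF cG by (intro mult_mono) auto
  have M: "real n + 1 \<le> 32 * real a * real (n - a)"
  proof -
    have "0 \<le> (real a - 1) * (real n - real a - 1)" using a1 an by (intro mult_nonneg_nonneg) auto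
    then have "real n - 1 \<le> real a * (real n - real a)" by (simp add: algebra_simps)
    moreover have "real n \<ge> 2" using a1 an by simp
    moreover have "real (n - a) = real n - real a" using an by (simp add: of_nat_diff)
    ultimately show ?thesis by (simp only: mult.assoc)
  qed
  show ?thesis
  proof (cases "F = {} \<or> G = {}")
    case True
    then show ?thesis by (auto intro!: mult_nonneg_nonneg)
  next
    case False
    then have Fne: "F \<noteq> {}" and Gne: "G \<noteq> {}" by auto
    define p :: real where "p = real a / real n"
    define s :: real where "s = real d / (4 * real a)"
    define w0 where "w0 = p^a * (1-p)^(n-a)"
    define K where "K = (p + (1-p)*exp s)*(p+(1-p)*exp(-s))"
    have n0: "0 < real n" using an by simp
    have p0: "0 < p" "p < 1" using a1 an n0 by (auto simp: p_def field_simps)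
    have s0: "0 \<le> s" "s \<le> 1" using a1 dle by (auto simp: s_def field_simps)
    have w0p: "0 < w0" using p0 by (simp add: w0_def)
    have FP: "F \<subseteq> Pow {1..n}" and GP: "G \<subseteq> Pow {1..n}" using Fs Gs by auto
    have finF: "finite F" using FP by (rule finite_subset) simp
    have wtF: "wt n p Z = w0" if "Z \<in> F \<or> Z \<in> G" for Z using that Fs Gs by (auto simp: wt_def w0_def)
    have muF: "mu n p F = real (card F) * w0"
    proof -
      have "mu n p F = sum (wt n p) {Z \<in> Pow {1..n}. Z \<in> F}"
        unfolding mu_def using sum.inter_filter[of "Pow {1..n}" "wt n p" "\<lambda>Z. Z \<in> F"] by simp
      also have "{Z \<in> Pow {1..n}. Z \<in> F} = F" using FP by auto
      also have "sum (wt n p) F = sum (\<lambda>_. w0) F" using wtF by (intro sum.cong) auto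
      finally show ?thesis by simp
    qed
    have hd: "real d \<le> real (hF F Z)" if "Z \<in> G" for Z
    proof -
      obtain X where X: "X \<in> F" "hF F Z = card (X - Z)" using hF_attain[OF finF Fne] by blast
      have fX: "finite X" using X(1) FP finite_subset by blast
      have "card (X - Z) = card X - card (X \<inter> Z)" by (rule card_Diff_subset_Int) (use fX in simp)
      moreover have "card X = a" using X(1) Fs by auto
      moreover have "card (X \<inter> Z) \<le> t" using FG X(1) that by blast
      ultimately have "d \<le> hF F Z" using X(2) by (simp add: d_def)
      then show ?thesis by simp
    qed
    have PhiG: "real (card G) * w0 * exp (s * real d) \<le> Phi n p s F"
    proof -
      have "real (card G) * w0 * exp (s * real d) = (\<Sum>Z\<in>G. w0 * exp (s * real d))" by simp
      also have "\<dots> \<le> (\<Sum>Z\<in>G. wt n p Z * exp (s * real (hF F Z)))"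
      proof (rule sum_mono)
        fix Z assume Z: "Z \<in> G"
        have "s * real d \<le> s * real (hF F Z)" using hd[OF Z] s0 by (simp add: mult_left_mono)
        then show "w0 * exp (s * real d) \<le> wt n p Z * exp (s * real (hF F Z))"
          using wtF[of Z] Z w0p by simp
      qed
      also have "\<dots> \<le> Phi n p s F" unfolding Phi_def
        by (rule sum_mono2) (use GP wt_nonneg[of p n] p0 in auto)
      finally show ?thesis .
    qed
    have cube': "Phi n p s F * mu n p F \<le> K^n" unfolding K_def by (rule cube[OF p0 s0(1) Fne FP])
    have K0: "0 \<le> K" using p0 unfolding K_def by (intro mult_nonneg_nonneg) auto
    have Kb: "K^n \<le> exp (2 * real a * s^2)"
    proof -
      have "K^n \<le> (exp (p * (2 * s^2)))^n" unfolding K_def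
        by (rule power_mono[OF K_bound]) (use p0 s0 K0 K_def in auto)
      also have "\<dots> = exp (real n * (p * (2 * s^2)))" by (simp flip: exp_of_nat_mult)
      also have "real n * (p * (2 * s^2)) = 2 * real a * s^2" using n0 by (simp add: p_def)
      finally show ?thesis .
    qed
    have ex: "2 * real a * s^2 - s * real d = - (real d^2/(8*real a))"
      using a1 by (simp add: s_def field_simps power2_eq_square)
    have key: "real (card F) * real (card G) * w0^2 \<le> exp (- (real d^2/(8*real a)))"
    proof -
      have "(real (card G) * w0 * exp (s * real d)) * (real (card F) * w0) \<le> Phi n p s F * mu n p F"
        unfolding muF[symmetric] by (rule mult_right_mono[OF PhiG]) (use mu_nonneg p0 in auto)
      also have "\<dots> \<le> exp (2 * real a * s^2)" using cube' Kb by linarith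
      finally have "real (card F) * real (card G) * w0^2 * exp (s * real d) \<le> exp (2 * real a * s^2)"
        by (simp add: algebra_simps power2_eq_square)
      then have "real (card F) * real (card G) * w0^2 \<le> exp (2 * real a * s^2) / exp (s * real d)"
        by (simp add: field_simps)
      also have "\<dots> = exp (2 * real a * s^2 - s * real d)" by (simp add: exp_diff)
      finally show ?thesis unfolding ex .
    qed
    have bm: "1 \<le> real (Suc n) * (Cb * w0)"
      using binom_mode[OF _ an] a1 unfolding Cb_def w0_def p_def by (simp add: mult.assoc)
    have main: "real (card F) * real (card G) \<le> (real n + 1)^2 * Cb^2 * exp (- (real d^2/(8*real a)))"
    proof -
      have b2: "1 \<le> ((real n + 1) * (Cb * w0))^2" using one_le_power[of "(real n + 1) * (Cb * w0)" 2] bm by (simp add: add.commute)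
      have c0: "0 \<le> real (card F) * real (card G)" by simp
      have "real (card F) * real (card G) \<le> real (card F) * real (card G) * ((real n + 1) * (Cb * w0))^2"
        using mult_left_mono[OF b2 c0] by simp
      also have "\<dots> = (real n + 1)^2 * Cb^2 * (real (card F) * real (card G) * w0^2)"
        by (simp only: power_mult_distrib mult_ac)
      also have "\<dots> \<le> (real n + 1)^2 * Cb^2 * exp (- (real d^2/(8*real a)))"
        by (rule mult_left_mono[OF key]) simp
      finally show ?thesis .
    qed
    have "real (card F) * real (card G) \<le> (32 * real a * real (n - a)) * exp (- ((real d - 1)^2) / (20 * real a)) * Cb^2"
      by (rule final_real[OF _ _ _ M triv main]) (use a1 d1 an in auto)
    then show ?thesis unfolding dr Cb_def by (simp add: mult.assoc)
  qed
qed

end
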